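(* For any $\sigma>0$ there exists $\varepsilon_0>0$ such that for every $\epsilon\in(-\varepsilon_0,\varepsilon_0)\setminus\{0\}$ and every admissible $(d,\eta)$ (i.e. $d\in(\sigma,1/\sigma)$, $\eta\in\mathbb R^6$, $|\eta|\le 1/\sigma$, $\delta=|\epsilon|d$, $\xi=\xi_0+\sqrt\delta\eta$) there are radii $R^1_\delta,R^2_\delta>0$ with $$B(\xi,R^1_\delta\sqrt\delta)\subset\{x\in\Omega:0<u_0(x)+\epsilon v_0(x)<PU_{\delta,\xi}(x)\}\cap B(\xi,\delta^{1/4})\subset B(\xi,R^2_\delta\sqrt\delta),$$ and $R^1_\delta,R^2_\delta=R_0+o(1)$ as $\epsilon\to0$, where $R_0:=\big(\alpha_6/u_0(\xi_0)\big)^{1/4}$.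
   Context: $\Omega\subset\mathbb R^6$ bounded smooth domain; $\lambda_0>0$; $u_0\in H^1_0(\Omega)$ solves $-\Delta u_0=|u_0|u_0+\lambda_0u_0$ in $\Omega$, $u_0=0$ on $\partial\Omega$; $\xi_0\in\Omega$ with $\max_\Omega u_0=u_0(\xi_0)>0$ and $\lambda_0=2u_0(\xi_0)$; $u_0$ is non-degenerate and $v_0\in H^1_0(\Omega)$ solves $-\Delta v_0-(2|u_0|+\lambda_0)v_0=u_0$. $\alpha_6=24$, $U_{\delta,\xi}(x)=\alpha_6\delta^2/(\delta^2+|x-\xi|^2)^2$, and $PU_{\delta,\xi}\in H^1_0(\Omega)$ solves $-\Delta PU_{\delta,\xi}=U_{\delta,\xi}^2$ in $\Omega$. $B(\xi,r)$ is the open ball of radius $r$ centered at $\xi$. *)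

theory Defs
  imports "HOL-Analysis.Analysis"
begin

type_synonym R6 = "real^6"

definition pd :: "6 \<Rightarrow> (R6 \<Rightarrow> real) \<Rightarrow> R6 \<Rightarrow> real" where
  "pd i f x = deriv (\<lambda>t. f (x + t *\<^sub>R axis i 1)) 0"

fun iter_pd :: "6 list \<Rightarrow> (R6 \<Rightarrow> real) \<Rightarrow> R6 \<Rightarrow> real" where
  "iter_pd [] f = f"
| "iter_pd (i # is) f = pd i (iter_pd is f)"

definition Ck_on :: "nat \<Rightarrow> R6 set \<Rightarrow> (R6 \<Rightarrow> real) \<Rightarrow> bool" where
  "Ck_on k S f \<longleftrightarrow>
     (\<forall>is. length is \<le> k \<longrightarrow>
        continuous_on S (iter_pd is f) \<and>
        (length is < k \<longrightarrow> (\<forall>i. \<forall>x\<in>S.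
            (\<lambda>t. iter_pd is f (x + t *\<^sub>R axis i 1)) differentiable (at 0))))"

definition smooth_on :: "R6 set \<Rightarrow> (R6 \<Rightarrow> real) \<Rightarrow> bool" where
  "smooth_on S f \<longleftrightarrow> (\<forall>k. Ck_on k S f)"

definition laplacian :: "(R6 \<Rightarrow> real) \<Rightarrow> R6 \<Rightarrow> real" where
  "laplacian f x = (\<Sum>i\<in>UNIV. pd i (pd i f) x)"

definition smooth_bounded_domain :: "R6 set \<Rightarrow> bool" where
  "smooth_bounded_domain \<Omega> \<longleftrightarrow> open \<Omega> \<and> bounded \<Omega> \<and> connected \<Omega> \<and> \<Omega> \<noteq> {} \<and>
     (\<exists>\<rho>. smooth_on UNIV \<rho> \<and> \<Omega> = {x. \<rho> x < 0} \<and>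
          (\<forall>x. \<rho> x = 0 \<longrightarrow> (\<exists>i. pd i \<rho> x \<noteq> 0)))"

definition dirichlet_class :: "R6 set \<Rightarrow> (R6 \<Rightarrow> real) \<Rightarrow> bool" where
  "dirichlet_class \<Omega> f \<longleftrightarrow> Ck_on 2 \<Omega> f \<and> continuous_on (closure \<Omega>) f \<and>
     (\<forall>x\<in>frontier \<Omega>. f x = 0)"

definition alpha6 :: real where "alpha6 = 24"

definition U_bubble :: "real \<Rightarrow> R6 \<Rightarrow> R6 \<Rightarrow> real" where
  "U_bubble \<delta> \<xi> x = alpha6 * \<delta>\<^sup>2 / (\<delta>\<^sup>2 + (norm (x - \<xi>))\<^sup>2)\<^sup>2"

end

theory Submission
  imports Defs
begin


lemma norm_line:
  fixes a :: R6
  shows "(norm (a + t *\<^sub>R axis i 1))\<^sup>2 = (norm a)\<^sup>2 + 2 * t * a $ i + t\<^sup>2"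
proof -
  have "(norm (a + t *\<^sub>R axis i 1))\<^sup>2 = inner (a + t *\<^sub>R axis i 1) (a + t *\<^sub>R axis i 1)"
    by (simp add: power2_norm_eq_inner)
  also have "\<dots> = inner a a + 2 * t * inner a (axis i 1) + t\<^sup>2 * inner (axis i (1::real)) (axis i 1)"
    by (simp add: inner_add_left inner_add_right inner_commute power2_eq_square algebra_simps)
  also have "\<dots> = (norm a)\<^sup>2 + 2 * t * a $ i + t\<^sup>2"
    by (simp add: inner_axis power2_norm_eq_inner inner_axis_axis)
  finally show ?thesis .
qed

lemma second_deriv_max:
  fixes g h :: "real \<Rightarrow> real"
  assumes r: "r > 0"
    and dg: "\<And>t. \<bar>t\<bar> < r \<Longrightarrow> (g has_real_derivative h t) (at t)"
    and dh: "(h has_real_derivative c) (at 0)"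
    and mx: "\<And>t. \<bar>t\<bar> < r \<Longrightarrow> g t \<le> g 0"
  shows "c \<le> 0"
proof (rule ccontr)
  assume "\<not> c \<le> 0" hence c: "c > 0" by simp
  have h0: "h 0 = 0"
    using DERIV_local_max[OF dg[of 0] r] mx r by auto
  obtain d where d: "d > 0" "\<And>s. s > 0 \<Longrightarrow> s < d \<Longrightarrow> h 0 < h (0 + s)"
    using DERIV_pos_inc_right[OF dh c] by blast
  define t where "t = min d r / 2"
  have t: "0 < t" "t < d" "t < r" using d r by (auto simp: t_def)
  have "g 0 < g t"
  proof (rule DERIV_pos_imp_increasing_open[OF t(1)])
    fix x assume x: "0 < x" "x < t"
    then show "\<exists>y. DERIV g x :> y \<and> 0 < y"
      using dg[of x] d(2)[of x] h0 t by auto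
  next
    show "continuous_on {0..t} g"
      by (rule DERIV_continuous_on[where D=h]) (use dg t in \<open>auto intro: has_field_derivative_at_within\<close>)
  qed
  with mx[of t] t show False by auto
qed

definition second_along :: "(R6 \<Rightarrow> real) \<Rightarrow> R6 \<Rightarrow> 6 \<Rightarrow> real \<Rightarrow> bool" where
  "second_along w p i c \<longleftrightarrow> (\<exists>r>0. \<exists>h. (\<forall>t. \<bar>t\<bar> < r \<longrightarrow>
      ((\<lambda>s. w (p + s *\<^sub>R axis i 1)) has_real_derivative h t) (at t)) \<and> (h has_real_derivative c) (at 0))"

lemma norm_axis_line: "norm (t *\<^sub>R (axis i 1 :: R6)) = \<bar>t\<bar>"
  by simp

lemma sa_C2:
  assumes C: "Ck_on 2 \<Omega> f" and op: "open \<Omega>" and p: "p \<in> \<Omega>"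
  shows "second_along f p i (pd i (pd i f) p)"
proof -
  obtain r where r: "r > 0" "ball p r \<subseteq> \<Omega>" using openE[OF op p] by metis
  have in\<Omega>: "p + t *\<^sub>R axis i 1 \<in> \<Omega>" if "\<bar>t\<bar> < r" for t
  proof -
    have "p + t *\<^sub>R axis i 1 \<in> ball p r" using that by (simp add: dist_norm norm_axis_line)
    then show ?thesis using r(2) by blast
  qed
  have ck: "\<And>is j x. length is < 2 \<Longrightarrow> x \<in> \<Omega> \<Longrightarrow>
      (\<lambda>t. iter_pd is f (x + t *\<^sub>R axis j 1)) differentiable (at 0)"
    using C unfolding Ck_on_def by (meson less_imp_le)
  have d0: "\<And>y. y \<in> \<Omega> \<Longrightarrow> (\<lambda>t. f (y + t *\<^sub>R axis i 1)) differentiable (at 0)"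
    using ck[of "[]"] by simp
  have d1: "\<And>y. y \<in> \<Omega> \<Longrightarrow> (\<lambda>t. pd i f (y + t *\<^sub>R axis i 1)) differentiable (at 0)"
    using ck[of "[i]"] by simp
  have "\<forall>t. \<bar>t\<bar> < r \<longrightarrow> ((\<lambda>s. f (p + s *\<^sub>R axis i 1)) has_real_derivative pd i f (p + t *\<^sub>R axis i 1)) (at t)"
  proof (intro allI impI)
    fix t assume t: "\<bar>t\<bar> < r"
    let ?y = "p + t *\<^sub>R axis i 1"
    have "((\<lambda>s. f (?y + s *\<^sub>R axis i 1)) has_real_derivative pd i f ?y) (at 0)"
      using d0[OF in\<Omega>[OF t]] unfolding pd_def by (simp add: DERIV_deriv_iff_real_differentiable)
    moreover have "(\<lambda>s. f (?y + s *\<^sub>R axis i 1)) = (\<lambda>s. (\<lambda>s. f (p + s *\<^sub>R axis i 1)) (s + t))"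
      by (simp add: scaleR_add_left algebra_simps)
    ultimately show "((\<lambda>s. f (p + s *\<^sub>R axis i 1)) has_real_derivative pd i f ?y) (at t)"
      using DERIV_shift[of "\<lambda>s. f (p + s *\<^sub>R axis i 1)" "pd i f ?y" 0 t] by simp
  qed
  moreover have "((\<lambda>t. pd i f (p + t *\<^sub>R axis i 1)) has_real_derivative pd i (pd i f) p) (at 0)"
    using d1[OF p] unfolding pd_def[of i "pd i f"] by (simp add: DERIV_deriv_iff_real_differentiable)
  ultimately show ?thesis unfolding second_along_def
    apply -
    apply (rule exI[of _ r], rule conjI, rule r(1))
    apply (rule exI[of _ "\<lambda>t. pd i f (p + t *\<^sub>R axis i 1)"])
    by (rule conjI)
qed

lemma sa_diff:
  assumes "second_along f p i a" "second_along g p i b"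
  shows "second_along (\<lambda>x. f x - g x) p i (a - b)"
proof -
  obtain r1 h1 where 1: "r1 > 0" "\<forall>t. \<bar>t\<bar> < r1 \<longrightarrow>
      ((\<lambda>s. f (p + s *\<^sub>R axis i 1)) has_real_derivative h1 t) (at t)" "(h1 has_real_derivative a) (at 0)"
    using assms(1) unfolding second_along_def by blast
  obtain r2 h2 where 2: "r2 > 0" "\<forall>t. \<bar>t\<bar> < r2 \<longrightarrow>
      ((\<lambda>s. g (p + s *\<^sub>R axis i 1)) has_real_derivative h2 t) (at t)" "(h2 has_real_derivative b) (at 0)"
    using assms(2) unfolding second_along_def by blast
  show ?thesis unfolding second_along_def
    apply (rule exI[of _ "min r1 r2"], rule conjI, simp add: 1 2)
    apply (rule exI[of _ "\<lambda>t. h1 t - h2 t"])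
    using 1 2 by (auto intro!: derivative_intros)
qed

lemma sum_sq_norm: "(\<Sum>i\<in>UNIV. (a $ i)\<^sup>2) = (norm (a::R6))\<^sup>2"
proof -
  have "(norm a)\<^sup>2 = inner a a" by (rule power2_norm_eq_inner)
  also have "\<dots> = (\<Sum>i\<in>UNIV. inner (a$i) (a$i))" by (rule inner_vec_def)
  finally show ?thesis by (simp add: power2_eq_square)
qed

lemma t1: assumes S: "S > (0::real)" shows "- 576 * d\<^sup>2 / S ^ 3 + 576 * d\<^sup>2 * (S - d\<^sup>2) / S ^ 4 = - (24 * d\<^sup>2 / S\<^sup>2)\<^sup>2"
proof -
  have e: "576 * d\<^sup>2 / S ^ 3 = 576 * d\<^sup>2 * S / S ^ 4"
    using S by (simp add: eval_nat_numeral)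
  have "- 576 * d\<^sup>2 / S ^ 3 + 576 * d\<^sup>2 * (S - d\<^sup>2) / S ^ 4 = (- 576 * d\<^sup>2 * S + 576 * d\<^sup>2 * (S - d\<^sup>2)) / S ^ 4"
    using e by (simp add: add_divide_distrib diff_divide_distrib)
  also have "\<dots> = - 576 * d^4 / S^4" by (simp add: algebra_simps power2_eq_square power4_eq_xxxx)
  also have "\<dots> = - (24 * d\<^sup>2 / S\<^sup>2)\<^sup>2" by (simp add: power_divide power_mult_distrib power2_eq_square power4_eq_xxxx)
  finally show ?thesis .
qed

lemma cq1: "(Q::real) \<noteq> 0 \<Longrightarrow> 48 * (D * ((2 * a + 2 * t) * Q)) / Q ^ 4 = 96 * D * (a + t) / Q ^ 3"
  by (simp add: field_simps eval_nat_numeral)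

lemma cq2: "(S0::real) \<noteq> 0 \<Longrightarrow> (576 * (D * (ai * (ai * S0\<^sup>2))) - 96 * D * S0 ^ 3) / S0 ^ 6 =
     576 * D * ai\<^sup>2 / S0 ^ 4 - 96 * D / S0 ^ 3"
  by (simp add: field_simps eval_nat_numeral)

lemma sa_U:
  assumes \<delta>: "\<delta> > 0"
  shows "second_along (U_bubble \<delta> \<xi>) p i
     (- 96 * \<delta>\<^sup>2 / (\<delta>\<^sup>2 + (norm (p - \<xi>))\<^sup>2) ^ 3
      + 576 * \<delta>\<^sup>2 * ((p - \<xi>) $ i)\<^sup>2 / (\<delta>\<^sup>2 + (norm (p - \<xi>))\<^sup>2) ^ 4)"
proof -
  define a where "a = p - \<xi>"
  define S0 where "S0 = \<delta>\<^sup>2 + (norm a)\<^sup>2"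
  define ai where "ai = a $ i"
  have Spos: "S0 + 2 * t * ai + t\<^sup>2 > 0" for t
  proof -
    have "S0 + 2 * t * ai + t\<^sup>2 = \<delta>\<^sup>2 + (norm (a + t *\<^sub>R axis i 1))\<^sup>2"
      by (simp add: S0_def ai_def norm_line)
    also have "\<dots> > 0" using \<delta> by (simp add: add_pos_nonneg)
    finally show ?thesis .
  qed
  have feq: "(\<lambda>s. U_bubble \<delta> \<xi> (p + s *\<^sub>R axis i 1)) = (\<lambda>s. 24 * \<delta>\<^sup>2 / (S0 + 2 * s * ai + s\<^sup>2)\<^sup>2)"
  proof
    fix s
    have eq: "p + s *\<^sub>R axis i 1 - \<xi> = a + s *\<^sub>R axis i 1" by (simp add: a_def algebra_simps)
    have "(norm (p + s *\<^sub>R axis i 1 - \<xi>))\<^sup>2 = (norm a)\<^sup>2 + 2 * s * ai + s\<^sup>2"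
      by (simp only: eq norm_line ai_def)
    then show "U_bubble \<delta> \<xi> (p + s *\<^sub>R axis i 1) = 24 * \<delta>\<^sup>2 / (S0 + 2 * s * ai + s\<^sup>2)\<^sup>2"
      by (simp add: U_bubble_def alpha6_def S0_def add.assoc)
  qed
  define h where "h t = - 96 * \<delta>\<^sup>2 * (ai + t) / (S0 + 2 * t * ai + t\<^sup>2) ^ 3" for t
  have dg: "((\<lambda>s. 24 * \<delta>\<^sup>2 / (S0 + 2 * s * ai + s\<^sup>2)\<^sup>2) has_real_derivative h t) (at t)" for t
  proof -
    have ne: "S0 + 2 * t * ai + t\<^sup>2 \<noteq> 0" using Spos[of t] by simp
    show ?thesis
      unfolding h_def
      apply (rule derivative_eq_intros refl | simp add: ne)+
      using cq1[OF ne] by simp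
  qed
  have dh: "(h has_real_derivative (- 96 * \<delta>\<^sup>2 / S0 ^ 3 + 576 * \<delta>\<^sup>2 * ai\<^sup>2 / S0 ^ 4)) (at 0)"
  proof -
    have ne: "S0 \<noteq> 0" using Spos[of 0] by simp
    show ?thesis unfolding h_def
      apply (rule derivative_eq_intros refl | simp add: ne)+
      using cq2[OF ne] by simp
  qed
  have ceq: "(- 96 * \<delta>\<^sup>2 / (\<delta>\<^sup>2 + (norm (p - \<xi>))\<^sup>2) ^ 3
      + 576 * \<delta>\<^sup>2 * ((p - \<xi>) $ i)\<^sup>2 / (\<delta>\<^sup>2 + (norm (p - \<xi>))\<^sup>2) ^ 4)
     = - 96 * \<delta>\<^sup>2 / S0 ^ 3 + 576 * \<delta>\<^sup>2 * ai\<^sup>2 / S0 ^ 4"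
    by (simp only: S0_def ai_def a_def)
  show ?thesis unfolding second_along_def feq ceq
    apply (rule exI[of _ 1], rule conjI, simp)
    apply (rule exI[of _ h]) using dg dh by blast
qed

lemma lap_U:
  assumes \<delta>: "\<delta> > 0"
  shows "(\<Sum>i\<in>UNIV. - 96 * \<delta>\<^sup>2 / (\<delta>\<^sup>2 + (norm (p - \<xi>))\<^sup>2) ^ 3
      + 576 * \<delta>\<^sup>2 * ((p - \<xi>) $ i)\<^sup>2 / (\<delta>\<^sup>2 + (norm (p - \<xi>))\<^sup>2) ^ 4) = - (U_bubble \<delta> \<xi> p)\<^sup>2"
proof -
  define N where "N = (norm (p - \<xi>))\<^sup>2"
  have S: "\<delta>\<^sup>2 + N > 0" using \<delta> by (simp add: N_def add_pos_nonneg)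
  have "(\<Sum>i\<in>UNIV. - 96 * \<delta>\<^sup>2 / (\<delta>\<^sup>2 + N) ^ 3 + 576 * \<delta>\<^sup>2 * ((p - \<xi>) $ i)\<^sup>2 / (\<delta>\<^sup>2 + N) ^ 4)
     = - 576 * \<delta>\<^sup>2 / (\<delta>\<^sup>2 + N) ^ 3 + 576 * \<delta>\<^sup>2 * N / (\<delta>\<^sup>2 + N) ^ 4"
  proof -
    have "(\<Sum>i\<in>UNIV. 576 * \<delta>\<^sup>2 * ((p - \<xi>) $ i)\<^sup>2 / (\<delta>\<^sup>2 + N) ^ 4)
        = 576 * \<delta>\<^sup>2 * (\<Sum>i\<in>UNIV. ((p - \<xi>) $ i)\<^sup>2) / (\<delta>\<^sup>2 + N) ^ 4"
      by (simp add: sum_divide_distrib sum_distrib_left)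
    also have "\<dots> = 576 * \<delta>\<^sup>2 * N / (\<delta>\<^sup>2 + N) ^ 4" by (simp only: sum_sq_norm N_def)
    finally have 1: "(\<Sum>i\<in>UNIV. 576 * \<delta>\<^sup>2 * ((p - \<xi>) $ i)\<^sup>2 / (\<delta>\<^sup>2 + N) ^ 4) = 576 * \<delta>\<^sup>2 * N / (\<delta>\<^sup>2 + N) ^ 4" .
    show ?thesis by (simp only: sum.distrib 1) simp
  qed
  also have "\<dots> = - (24 * \<delta>\<^sup>2 / (\<delta>\<^sup>2 + N)\<^sup>2)\<^sup>2"
    using t1[OF S, of \<delta>] by simp
  finally show ?thesis by (simp add: U_bubble_def alpha6_def N_def)
qed



lemma max_principle:
  fixes w :: "R6 \<Rightarrow> real"
  assumes bdd: "bounded \<Omega>" and op: "open \<Omega>"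
    and cont: "continuous_on (closure \<Omega>) w"
    and fr: "\<forall>x\<in>frontier \<Omega>. w x \<le> M"
    and sa: "\<forall>p\<in>\<Omega>. \<exists>c. (\<forall>i. second_along w p i (c i)) \<and> sum c UNIV \<ge> 0"
  shows "\<forall>x\<in>\<Omega>. w x \<le> M"
proof (rule ccontr)
  assume "\<not> ?thesis" then obtain x1 where x1: "x1 \<in> \<Omega>" "w x1 > M" by auto
  have cpt: "compact (closure \<Omega>)" using bdd by (simp add: compact_closure)
  obtain B0 where B0: "\<forall>y\<in>closure \<Omega>. norm y \<le> B0"
    using bounded_closure[OF bdd] unfolding bounded_iff by blast
  define B where "B = B0 + norm x1"
  have B: "\<forall>y\<in>closure \<Omega>. norm (y - x1) \<le> B"
  proof
    fix y assume "y \<in> closure \<Omega>"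
    then have "norm y \<le> B0" using B0 by blast
    moreover have "norm (y - x1) \<le> norm y + norm x1" by (rule norm_triangle_ineq4)
    ultimately show "norm (y - x1) \<le> B" by (simp add: B_def)
  qed
  have x1c: "x1 \<in> closure \<Omega>" using x1(1) closure_subset by blast
  define e where "e = (w x1 - M) / (2 * (B\<^sup>2 + 1))"
  have Bp: "2 * (B\<^sup>2 + 1) > 0" by (smt (verit) zero_le_power2)
  have epos: "e > 0" using x1 Bp unfolding e_def by (intro divide_pos_pos) auto
  have eB: "e * B\<^sup>2 < w x1 - M"
  proof -
    have "e * B\<^sup>2 = (w x1 - M) * (B\<^sup>2 / (2 * (B\<^sup>2 + 1)))" by (simp add: e_def)
    also have "\<dots> < (w x1 - M) * 1"
    proof (rule mult_strict_left_mono)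
      have "B\<^sup>2 < 2 * (B\<^sup>2 + 1)" by (smt (verit) zero_le_power2)
      then show "B\<^sup>2 / (2 * (B\<^sup>2 + 1)) < 1" by (simp only: divide_less_eq_1_pos[OF Bp])
      show "0 < w x1 - M" using x1 by simp
    qed
    finally show ?thesis by simp
  qed
  define v where "v y = w y + e * (norm (y - x1))\<^sup>2" for y
  have vc: "continuous_on (closure \<Omega>) v" unfolding v_def
    by (intro continuous_intros cont)
  have ne: "closure \<Omega> \<noteq> {}" using x1c by (metis empty_iff)
  obtain p where p: "p \<in> closure \<Omega>" "\<forall>y\<in>closure \<Omega>. v y \<le> v p"
    using continuous_attains_sup[OF cpt ne vc] by blast
  have pO: "p \<in> \<Omega>"
  proof (rule ccontr)
    assume "p \<notin> \<Omega>"
    then have "p \<in> frontier \<Omega>" using p(1) closure_Un_frontier by blast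
    then have "w p \<le> M" using fr by blast
    moreover have "(norm (p - x1))\<^sup>2 \<le> B\<^sup>2"
      using B p(1) by (meson norm_ge_zero power_mono)
    then have "e * (norm (p - x1))\<^sup>2 \<le> e * B\<^sup>2" using epos by (intro mult_left_mono) auto
    ultimately have "v p < w x1"
      using eB unfolding v_def by linarith
    moreover have "v x1 = w x1" by (simp add: v_def)
    moreover have "v x1 \<le> v p" using p(2) x1c by blast
    ultimately show False by linarith
  qed
  obtain c where c: "\<forall>i. second_along w p i (c i)" "sum c UNIV \<ge> 0" using sa pO by blast
  have "\<exists>i. c i + 2 * e > 0"
  proof (rule ccontr)
    assume "\<not> ?thesis"
    then have "\<forall>i. c i + 2 * e \<le> 0" by (simp add: not_less)
    then have "(\<Sum>i\<in>UNIV. c i + 2 * e) \<le> 0" by (simp add: sum_nonpos)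
    moreover have "(\<Sum>i\<in>UNIV. c i + 2 * e) = sum c UNIV + 12 * e"
      by (simp add: sum.distrib)
    ultimately show False using c(2) epos by simp
  qed
  then obtain i where ci: "c i + 2 * e > 0" by blast
  obtain r h where rh: "r > 0" "\<forall>t. \<bar>t\<bar> < r \<longrightarrow>
      ((\<lambda>s. w (p + s *\<^sub>R axis i 1)) has_real_derivative h t) (at t)" "(h has_real_derivative c i) (at 0)"
    using c(1) unfolding second_along_def by blast
  obtain r2 where r2: "r2 > 0" "ball p r2 \<subseteq> \<Omega>" using openE[OF op pO] by metis
  define A where "A = (p - x1) $ i"
  define N where "N = (norm (p - x1))\<^sup>2"
  have geq: "v (p + s *\<^sub>R axis i 1) = w (p + s *\<^sub>R axis i 1) + e * (N + 2 * s * A + s\<^sup>2)" for s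
  proof -
    have eq: "p + s *\<^sub>R axis i 1 - x1 = (p - x1) + s *\<^sub>R axis i 1" by (simp add: algebra_simps)
    show ?thesis unfolding v_def by (simp only: eq norm_line A_def N_def)
  qed
  have "c i + 2 * e \<le> 0"
  proof (rule second_deriv_max[where g = "\<lambda>s. v (p + s *\<^sub>R axis i 1)"
        and h = "\<lambda>t. h t + e * (2 * A + 2 * t)" and r = "min r r2"])
    show "0 < min r r2" using rh r2 by simp
  next
    fix t :: real assume t: "\<bar>t\<bar> < min r r2"
    have d: "((\<lambda>s. w (p + s *\<^sub>R axis i 1)) has_real_derivative h t) (at t)" using rh t by simp
    show "((\<lambda>s. v (p + s *\<^sub>R axis i 1)) has_real_derivative h t + e * (2 * A + 2 * t)) (at t)"
      unfolding geq
      by (rule derivative_eq_intros d refl | simp)+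
  next
    show "((\<lambda>t. h t + e * (2 * A + 2 * t)) has_real_derivative c i + 2 * e) (at 0)"
      by (rule derivative_eq_intros rh(3) refl | simp)+
  next
    fix t :: real assume t: "\<bar>t\<bar> < min r r2"
    have "p + t *\<^sub>R axis i 1 \<in> ball p r2" using t by (simp add: dist_norm norm_axis_line)
    then have "p + t *\<^sub>R axis i 1 \<in> closure \<Omega>" using r2(2) closure_subset by blast
    then show "v (p + t *\<^sub>R axis i 1) \<le> v (p + 0 *\<^sub>R axis i 1)" using p(2) by simp
  qed
  with ci show False by simp
qed



lemma U_nonneg: "U_bubble \<delta> \<xi> y \<ge> 0"
  by (simp add: U_bubble_def alpha6_def)

lemma U_cont: assumes "\<delta> > 0" shows "continuous_on S (U_bubble \<delta> \<xi>)"
proof -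
  have "\<And>x. (\<delta>\<^sup>2 + (norm (x - \<xi>))\<^sup>2)\<^sup>2 \<noteq> 0" using assms
    by (simp add: add_pos_nonneg)
  then show ?thesis unfolding U_bubble_def[abs_def]
    by (intro continuous_intros) auto
qed

lemma U_le:
  assumes \<delta>: "\<delta> > 0" and a: "a > 0" "norm (y - \<xi>) \<ge> a"
  shows "U_bubble \<delta> \<xi> y \<le> 24 * \<delta>\<^sup>2 / a ^ 4"
proof -
  have "a ^ 4 \<le> (norm (y - \<xi>))\<^sup>2 ^ 2" using a by (simp add: power_mono flip: power_mult)
  also have "\<dots> \<le> (\<delta>\<^sup>2 + (norm (y - \<xi>))\<^sup>2)\<^sup>2" by (intro power_mono) auto
  finally have le: "a ^ 4 \<le> (\<delta>\<^sup>2 + (norm (y - \<xi>))\<^sup>2)\<^sup>2" .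
  have "U_bubble \<delta> \<xi> y = 24 * \<delta>\<^sup>2 / (\<delta>\<^sup>2 + (norm (y - \<xi>))\<^sup>2)\<^sup>2" by (simp add: U_bubble_def alpha6_def)
  also have "\<dots> \<le> 24 * \<delta>\<^sup>2 / a ^ 4"
  proof (rule divide_left_mono)
    have a4: "a ^ 4 > 0" using a by simp
    show "a ^ 4 \<le> (\<delta>\<^sup>2 + (norm (y - \<xi>))\<^sup>2)\<^sup>2" by (rule le)
    show "0 \<le> 24 * \<delta>\<^sup>2" by simp
    show "0 < (\<delta>\<^sup>2 + (norm (y - \<xi>))\<^sup>2)\<^sup>2 * a ^ 4" using le a4 by (intro mult_pos_pos) auto
  qed
  finally show ?thesis .
qed

lemma PU_bounds:
  fixes P :: "R6 \<Rightarrow> real"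
  assumes bdd: "bounded \<Omega>" and op: "open \<Omega>" and \<delta>: "\<delta> > 0"
    and Pcl: "dirichlet_class \<Omega> P"
    and Peq: "\<forall>x\<in>\<Omega>. - laplacian P x = (U_bubble \<delta> \<xi> x)\<^sup>2"
    and fr: "\<forall>y\<in>frontier \<Omega>. U_bubble \<delta> \<xi> y \<le> Mb"
  shows "\<forall>x\<in>\<Omega>. P x \<le> U_bubble \<delta> \<xi> x \<and> U_bubble \<delta> \<xi> x - Mb \<le> P x"
proof -
  have C2: "Ck_on 2 \<Omega> P" and Pc: "continuous_on (closure \<Omega>) P" and P0: "\<forall>x\<in>frontier \<Omega>. P x = 0"
    using Pcl unfolding dirichlet_class_def by auto
  define U2 where "U2 p i = - 96 * \<delta>\<^sup>2 / (\<delta>\<^sup>2 + (norm (p - \<xi>))\<^sup>2) ^ 3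
      + 576 * \<delta>\<^sup>2 * ((p - \<xi>) $ i)\<^sup>2 / (\<delta>\<^sup>2 + (norm (p - \<xi>))\<^sup>2) ^ 4" for p i
  have saU: "second_along (U_bubble \<delta> \<xi>) p i (U2 p i)" for p i
    unfolding U2_def by (rule sa_U[OF \<delta>])
  have sumU: "sum (U2 p) UNIV = - (U_bubble \<delta> \<xi> p)\<^sup>2" for p
    unfolding U2_def by (rule lap_U[OF \<delta>])
  have lapP: "sum (\<lambda>i. pd i (pd i P) p) UNIV = - (U_bubble \<delta> \<xi> p)\<^sup>2" if "p \<in> \<Omega>" for p
    using Peq that unfolding laplacian_def by force
  have Uc: "continuous_on (closure \<Omega>) (U_bubble \<delta> \<xi>)" by (rule U_cont[OF \<delta>])
  have A: "\<forall>x\<in>\<Omega>. (\<lambda>x. P x - U_bubble \<delta> \<xi> x) x \<le> 0"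
  proof (rule max_principle[OF bdd op])
    show "continuous_on (closure \<Omega>) (\<lambda>x. P x - U_bubble \<delta> \<xi> x)"
      by (intro continuous_intros Pc Uc)
    show "\<forall>x\<in>frontier \<Omega>. P x - U_bubble \<delta> \<xi> x \<le> 0" using P0 U_nonneg by simp
    show "\<forall>p\<in>\<Omega>. \<exists>c. (\<forall>i. second_along (\<lambda>x. P x - U_bubble \<delta> \<xi> x) p i (c i)) \<and> 0 \<le> sum c UNIV"
    proof
      fix p assume p: "p \<in> \<Omega>"
      show "\<exists>c. (\<forall>i. second_along (\<lambda>x. P x - U_bubble \<delta> \<xi> x) p i (c i)) \<and> 0 \<le> sum c UNIV"
        apply (rule exI[of _ "\<lambda>i. pd i (pd i P) p - U2 p i"])
        using sa_diff[OF sa_C2[OF C2 op p] saU] lapP[OF p] sumU[of p]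
        by (simp add: sum_subtractf)
    qed
  qed
  have B: "\<forall>x\<in>\<Omega>. (\<lambda>x. U_bubble \<delta> \<xi> x - P x) x \<le> Mb"
  proof (rule max_principle[OF bdd op])
    show "continuous_on (closure \<Omega>) (\<lambda>x. U_bubble \<delta> \<xi> x - P x)"
      by (intro continuous_intros Pc Uc)
    show "\<forall>x\<in>frontier \<Omega>. U_bubble \<delta> \<xi> x - P x \<le> Mb" using P0 fr by simp
    show "\<forall>p\<in>\<Omega>. \<exists>c. (\<forall>i. second_along (\<lambda>x. U_bubble \<delta> \<xi> x - P x) p i (c i)) \<and> 0 \<le> sum c UNIV"
    proof
      fix p assume p: "p \<in> \<Omega>"
      show "\<exists>c. (\<forall>i. second_along (\<lambda>x. U_bubble \<delta> \<xi> x - P x) p i (c i)) \<and> 0 \<le> sum c UNIV"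
        apply (rule exI[of _ "\<lambda>i. U2 p i - pd i (pd i P) p"])
        using sa_diff[OF saU sa_C2[OF C2 op p]] lapP[OF p] sumU[of p]
        by (simp add: sum_subtractf)
    qed
  qed
  show ?thesis using A B by auto
qed

lemma powr_quarter: "(x::real) > 0 \<Longrightarrow> x powr (1/4) = sqrt (sqrt x)"
proof -
  assume x: "x > 0"
  have "sqrt (sqrt x) = (x powr (1/2)) powr (1/2)" using x by (simp add: powr_half_sqrt)
  also have "\<dots> = x powr (1/4)" by (simp add: powr_powr)
  finally show ?thesis by simp
qed



lemma R1_lower:
  fixes a c V K \<sigma> d :: real
  assumes c: "c > 0" and V: "V \<ge> 0" and K: "K \<ge> 0" and \<sigma>: "\<sigma> > 0" and a: "a > 0"
    and d: "0 < d" "d < 1 / \<sigma>"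
  shows "sqrt (sqrt (24 / (c + a * V + K * (a / \<sigma>)\<^sup>2)) - a / \<sigma>)
         \<le> sqrt (sqrt (24 / (c + a * V + K * (a * d)\<^sup>2)) - a * d)"
proof -
  have "a * d \<le> a * (1 / \<sigma>)" using a d by (intro mult_left_mono) auto
  then have ad: "a * d \<le> a / \<sigma>" by simp
  have ad0: "0 \<le> a * d" using a d by simp
  have sq: "(a * d)\<^sup>2 \<le> (a / \<sigma>)\<^sup>2" using ad ad0 by (intro power_mono) auto
  have L1pos: "0 < c + a * V + K * (a * d)\<^sup>2" using c a V K by (intro add_pos_nonneg) auto
  have Lle: "c + a * V + K * (a * d)\<^sup>2 \<le> c + a * V + K * (a / \<sigma>)\<^sup>2"
    using sq K by (simp add: mult_left_mono)
  have "24 / (c + a * V + K * (a / \<sigma>)\<^sup>2) \<le> 24 / (c + a * V + K * (a * d)\<^sup>2)"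
    using Lle L1pos by (intro divide_left_mono) (auto intro!: mult_pos_pos)
  then have "sqrt (24 / (c + a * V + K * (a / \<sigma>)\<^sup>2)) \<le> sqrt (24 / (c + a * V + K * (a * d)\<^sup>2))"
    by (rule real_sqrt_le_mono)
  then show ?thesis using ad by (intro real_sqrt_le_mono) linarith
qed

lemma R1_upper:
  fixes a c V K d :: real
  assumes c: "c > 0" and V: "V \<ge> 0" and K: "K \<ge> 0" and a: "a > 0" and d: "0 < d"
  shows "sqrt (sqrt (24 / (c + a * V + K * (a * d)\<^sup>2)) - a * d) \<le> sqrt (sqrt (24 / c))"
proof -
  have Lge: "c \<le> c + a * V + K * (a * d)\<^sup>2" using a V K by simp
  have "24 / (c + a * V + K * (a * d)\<^sup>2) \<le> 24 / c"
    using Lge c by (intro divide_left_mono) (auto intro!: mult_pos_pos)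
  then have "sqrt (24 / (c + a * V + K * (a * d)\<^sup>2)) \<le> sqrt (24 / c)" by (rule real_sqrt_le_mono)
  then show ?thesis using a d by (intro real_sqrt_le_mono) (smt (verit) mult_pos_pos)
qed

lemma lower_key:
  fixes \<delta> L R n :: real
  assumes \<delta>: "\<delta> > 0" and L: "L > 0" and R: "R = sqrt (sqrt (24 / L) - \<delta>)" "R > 0"
    and n: "0 \<le> n" "n < R * sqrt \<delta>"
  shows "L < 24 * \<delta>\<^sup>2 / (\<delta>\<^sup>2 + n\<^sup>2)\<^sup>2"
proof -
  have arg: "sqrt (24 / L) - \<delta> > 0"
  proof (rule ccontr)
    assume "\<not> ?thesis" then have "sqrt (24 / L) - \<delta> \<le> 0" by simp
    then have "sqrt (sqrt (24 / L) - \<delta>) \<le> 0" by simp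
    with R show False by simp
  qed
  have R2: "R\<^sup>2 = sqrt (24 / L) - \<delta>" using R(1) arg by simp
  have "n\<^sup>2 < (R * sqrt \<delta>)\<^sup>2" using n by (intro power_strict_mono) auto
  also have "\<dots> = R\<^sup>2 * \<delta>" using \<delta> by (simp add: power_mult_distrib)
  finally have n2: "n\<^sup>2 < R\<^sup>2 * \<delta>" .
  have e: "\<delta> * sqrt (24 / L) = \<delta>\<^sup>2 + R\<^sup>2 * \<delta>"
  proof -
    have "\<delta> * sqrt (24 / L) = \<delta> * (R\<^sup>2 + \<delta>)" using R2 by simp
    then show ?thesis by (simp add: algebra_simps power2_eq_square)
  qed
  have "\<delta>\<^sup>2 + n\<^sup>2 < \<delta> * sqrt (24 / L)"
    using n2 e by linarith
  moreover have "0 < \<delta>\<^sup>2 + n\<^sup>2" using \<delta> by (simp add: add_pos_nonneg)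
  ultimately have "(\<delta>\<^sup>2 + n\<^sup>2)\<^sup>2 < (\<delta> * sqrt (24 / L))\<^sup>2"
    by (intro power_strict_mono) auto
  also have "\<dots> = \<delta>\<^sup>2 * (24 / L)" using L by (simp add: power_mult_distrib)
  finally have lt: "(\<delta>\<^sup>2 + n\<^sup>2)\<^sup>2 < \<delta>\<^sup>2 * (24 / L)" .
  have pos: "0 < (\<delta>\<^sup>2 + n\<^sup>2)\<^sup>2" using \<delta> by (simp add: add_pos_nonneg)
  have "L * (\<delta>\<^sup>2 + n\<^sup>2)\<^sup>2 < L * (\<delta>\<^sup>2 * (24 / L))" by (rule mult_strict_left_mono[OF lt L])
  also have "\<dots> = 24 * \<delta>\<^sup>2" using L by simp
  finally show ?thesis using pos by (simp add: less_divide_eq)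
qed

lemma upper_key:
  fixes \<delta> L n :: real
  assumes \<delta>: "\<delta> > 0" and L: "L > 0" and n: "n > 0" and lt: "L < 24 * \<delta>\<^sup>2 / (\<delta>\<^sup>2 + n\<^sup>2)\<^sup>2"
  shows "n < sqrt (sqrt (24 / L)) * sqrt \<delta>"
proof -
  have "n ^ 4 \<le> (\<delta>\<^sup>2 + n\<^sup>2)\<^sup>2"
  proof -
    have "n ^ 4 = (n\<^sup>2)\<^sup>2" by simp
    also have "\<dots> \<le> (\<delta>\<^sup>2 + n\<^sup>2)\<^sup>2" by (intro power_mono) auto
    finally show ?thesis .
  qed
  then have "24 * \<delta>\<^sup>2 / (\<delta>\<^sup>2 + n\<^sup>2)\<^sup>2 \<le> 24 * \<delta>\<^sup>2 / n ^ 4"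
    using n by (intro divide_left_mono) (auto intro!: mult_pos_pos)
  with lt have "L < 24 * \<delta>\<^sup>2 / n ^ 4" by linarith
  then have "L * n ^ 4 < 24 * \<delta>\<^sup>2" using n by (simp add: less_divide_eq)
  then have "n ^ 4 < 24 * \<delta>\<^sup>2 / L" using L by (simp add: less_divide_eq mult.commute)
  also have "\<dots> = (sqrt (sqrt (24 / L)) * sqrt \<delta>) ^ 4"
  proof -
    have h4: "\<And>x::real. x ^ 4 = (x\<^sup>2)\<^sup>2" by simp
    have "(sqrt (sqrt (24 / L))) ^ 4 = ((sqrt (sqrt (24 / L)))\<^sup>2)\<^sup>2" by (rule h4)
    also have "\<dots> = 24 / L" using L by simp
    finally have 1: "(sqrt (sqrt (24 / L))) ^ 4 = 24 / L" .
    have "(sqrt \<delta>) ^ 4 = ((sqrt \<delta>)\<^sup>2)\<^sup>2" by (rule h4)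
    also have "\<dots> = \<delta>\<^sup>2" using \<delta> by simp
    finally have 2: "(sqrt \<delta>) ^ 4 = \<delta>\<^sup>2" .
    from 1 2 show ?thesis by (simp add: power_mult_distrib)
  qed
  finally show ?thesis
    by (rule power_less_imp_less_base) (use \<delta> L in \<open>auto intro!: mult_nonneg_nonneg\<close>)
qed



lemma m_props:
  fixes u0 :: "R6 \<Rightarrow> real"
  assumes uc: "continuous_on (closure \<Omega>) u0" and bdd: "bounded \<Omega>" and op: "open \<Omega>" and x0: "xi0 \<in> \<Omega>"
    and m_def: "m = (\<lambda>s. Sup ((\<lambda>x. u0 xi0 - u0 x) ` (\<Omega> \<inter> cball xi0 s)))"
  shows "\<And>s x. x \<in> \<Omega> \<Longrightarrow> norm (x - xi0) \<le> s \<Longrightarrow> u0 xi0 - u0 x \<le> m s"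
    and "\<And>s. 0 \<le> s \<Longrightarrow> 0 \<le> m s"
    and "\<And>e. e > 0 \<Longrightarrow> \<exists>s0>0. \<forall>s. 0 \<le> s \<and> s < s0 \<longrightarrow> m s \<le> e"
proof -
  have "compact (closure \<Omega>)" using bdd by (simp add: compact_closure)
  then have "bounded (u0 ` closure \<Omega>)" by (intro compact_imp_bounded compact_continuous_image uc)
  then obtain Bu where Bu: "\<forall>y\<in>u0 ` closure \<Omega>. norm y \<le> Bu" unfolding bounded_iff by blast
  have bnd: "\<And>s. bdd_above ((\<lambda>x. u0 xi0 - u0 x) ` (\<Omega> \<inter> cball xi0 s))"
  proof -
    fix s
    show "bdd_above ((\<lambda>x. u0 xi0 - u0 x) ` (\<Omega> \<inter> cball xi0 s))"
    proof (rule bdd_aboveI2)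
      fix x assume "x \<in> \<Omega> \<inter> cball xi0 s"
      then have "x \<in> closure \<Omega>" using closure_subset by blast
      then have "\<bar>u0 x\<bar> \<le> Bu" using Bu by force
      moreover have "\<bar>u0 xi0\<bar> \<le> Bu" using Bu x0 closure_subset by force
      ultimately show "u0 xi0 - u0 x \<le> 2 * Bu" by linarith
    qed
  qed
  show 1: "\<And>s x. x \<in> \<Omega> \<Longrightarrow> norm (x - xi0) \<le> s \<Longrightarrow> u0 xi0 - u0 x \<le> m s"
  proof -
    fix s x assume x: "x \<in> \<Omega>" "norm (x - xi0) \<le> s"
    then have "x \<in> \<Omega> \<inter> cball xi0 s" by (simp add: dist_norm norm_minus_commute)
    then show "u0 xi0 - u0 x \<le> m s" unfolding m_def using bnd by (auto intro!: cSup_upper)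
  qed
  show "\<And>s. 0 \<le> s \<Longrightarrow> 0 \<le> m s" using 1[of xi0] x0 by force
  show "\<And>e. e > 0 \<Longrightarrow> \<exists>s0>0. \<forall>s. 0 \<le> s \<and> s < s0 \<longrightarrow> m s \<le> e"
  proof -
    fix e :: real assume e: "e > 0"
    have "xi0 \<in> interior (closure \<Omega>)"
      using x0 op by (metis interior_maximal closure_subset subsetD)
    then have "continuous (at xi0) u0" by (rule continuous_on_interior[OF uc])
    then obtain s0 where s0: "s0 > 0" "\<forall>x. dist x xi0 < s0 \<longrightarrow> dist (u0 x) (u0 xi0) < e"
      unfolding continuous_at_eps_delta using e by blast
    show "\<exists>s0>0. \<forall>s. 0 \<le> s \<and> s < s0 \<longrightarrow> m s \<le> e"
    proof (intro exI[of _ s0] conjI allI impI)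
      show "s0 > 0" by (rule s0(1))
      fix s assume s: "0 \<le> s \<and> s < s0"
      show "m s \<le> e" unfolding m_def
      proof (rule cSup_least)
        show "(\<lambda>x. u0 xi0 - u0 x) ` (\<Omega> \<inter> cball xi0 s) \<noteq> {}" using x0 s by auto
        fix y assume "y \<in> (\<lambda>x. u0 xi0 - u0 x) ` (\<Omega> \<inter> cball xi0 s)"
        then obtain x where x: "x \<in> \<Omega>" "dist xi0 x \<le> s" "y = u0 xi0 - u0 x" by auto
        then have "dist x xi0 < s0" using s by (simp add: dist_commute)
        then have "dist (u0 x) (u0 xi0) < e" using s0 by blast
        then show "y \<le> e" using x(3) by (simp add: dist_real_def)
      qed
    qed
  qed
qed



theorem mainTheorem7:
  fixes \<Omega> :: "R6 set" and u0 v0 :: "R6 \<Rightarrow> real" and lam0 :: real and xi0 :: R6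
    and PU :: "real \<Rightarrow> R6 \<Rightarrow> R6 \<Rightarrow> real"
  assumes dom: "smooth_bounded_domain \<Omega>"
    and lam: "lam0 > 0"
    and u0_cl: "dirichlet_class \<Omega> u0"
    and u0_eq: "\<forall>x\<in>\<Omega>. - laplacian u0 x = \<bar>u0 x\<bar> * u0 x + lam0 * u0 x"
    and xi0_in: "xi0 \<in> \<Omega>" and xi0_max: "\<forall>x\<in>\<Omega>. u0 x \<le> u0 xi0" and xi0_pos: "u0 xi0 > 0"
    and lam_eq: "lam0 = 2 * u0 xi0"
    and nondeg: "\<forall>w. dirichlet_class \<Omega> w \<and>
                   (\<forall>x\<in>\<Omega>. - laplacian w x = (2 * \<bar>u0 x\<bar> + lam0) * w x)
                   \<longrightarrow> (\<forall>x\<in>\<Omega>. w x = 0)"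
    and v0_cl: "dirichlet_class \<Omega> v0"
    and v0_eq: "\<forall>x\<in>\<Omega>. - laplacian v0 x - (2 * \<bar>u0 x\<bar> + lam0) * v0 x = u0 x"
    and PU_cl: "\<forall>\<delta>>0. \<forall>\<xi>. dirichlet_class \<Omega> (PU \<delta> \<xi>) \<and>
                   (\<forall>x\<in>\<Omega>. - laplacian (PU \<delta> \<xi>) x = (U_bubble \<delta> \<xi> x)\<^sup>2)"
  shows "\<forall>\<sigma>>0. \<exists>eps0>0. \<exists>R1 R2 :: real \<Rightarrow> real \<Rightarrow> R6 \<Rightarrow> real.
     (\<forall>\<epsilon> d \<eta>. \<epsilon> \<noteq> 0 \<and> \<bar>\<epsilon>\<bar> < eps0 \<and> \<sigma> < d \<and> d < 1 / \<sigma> \<and> norm \<eta> \<le> 1 / \<sigma> \<longrightarrow>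
        (let \<delta> = \<bar>\<epsilon>\<bar> * d; \<xi> = xi0 + sqrt \<delta> *\<^sub>R \<eta>;
             A = {x\<in>\<Omega>. 0 < u0 x + \<epsilon> * v0 x \<and> u0 x + \<epsilon> * v0 x < PU \<delta> \<xi> x}
                 \<inter> ball \<xi> (\<delta> powr (1/4))
         in R1 \<epsilon> d \<eta> > 0 \<and> R2 \<epsilon> d \<eta> > 0 \<and>
            ball \<xi> (R1 \<epsilon> d \<eta> * sqrt \<delta>) \<subseteq> A \<and> A \<subseteq> ball \<xi> (R2 \<epsilon> d \<eta> * sqrt \<delta>))) \<and>
     (\<forall>e>0. \<exists>r>0. \<forall>\<epsilon> d \<eta>. \<epsilon> \<noteq> 0 \<and> \<bar>\<epsilon>\<bar> < min r eps0 \<and> \<sigma> < d \<and> d < 1 / \<sigma> \<and> norm \<eta> \<le> 1 / \<sigma> \<longrightarrow>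
        \<bar>R1 \<epsilon> d \<eta> - (alpha6 / u0 xi0) powr (1/4)\<bar> < e \<and>
        \<bar>R2 \<epsilon> d \<eta> - (alpha6 / u0 xi0) powr (1/4)\<bar> < e)"
proof (intro allI impI)
  fix \<sigma> :: real assume \<sigma>: "\<sigma> > 0"
  have op: "open \<Omega>" and bdd: "bounded \<Omega>" using dom unfolding smooth_bounded_domain_def by auto
  define c where "c = u0 xi0"
  have cpos: "c > 0" using xi0_pos c_def by simp
  have u0c: "continuous_on (closure \<Omega>) u0" using u0_cl unfolding dirichlet_class_def by auto
  have v0c: "continuous_on (closure \<Omega>) v0" using v0_cl unfolding dirichlet_class_def by auto
  obtain r0 where r0: "r0 > 0" "ball xi0 r0 \<subseteq> \<Omega>" using openE[OF op xi0_in] by metis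
  have "compact (closure \<Omega>)" using bdd by (simp add: compact_closure)
  then have "bounded (v0 ` closure \<Omega>)" by (intro compact_imp_bounded compact_continuous_image v0c)
  then obtain V0 where V0: "\<forall>y\<in>v0 ` closure \<Omega>. norm y \<le> V0" unfolding bounded_iff by blast
  define V where "V = max V0 0"
  have V: "V \<ge> 0" "\<And>x. x \<in> closure \<Omega> \<Longrightarrow> \<bar>v0 x\<bar> \<le> V"
    using V0 unfolding V_def by force+
  define K where "K = 384 / r0 ^ 4"
  have Kge: "K \<ge> 0" using r0 by (simp add: K_def)
  define m where "m = (\<lambda>s. Sup ((\<lambda>x. u0 xi0 - u0 x) ` (\<Omega> \<inter> cball xi0 s)))"
  note mp = m_props[OF u0c bdd op xi0_in m_def]
  define \<rho> where "\<rho> = (\<lambda>\<epsilon>::real. sqrt (sqrt (\<bar>\<epsilon>\<bar> / \<sigma>)) + sqrt (\<bar>\<epsilon>\<bar> / \<sigma>) / \<sigma>)"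
  define L2 where "L2 = (\<lambda>\<epsilon>. c - \<bar>\<epsilon>\<bar> * V - m (\<rho> \<epsilon>))"
  define G1 where "G1 = (\<lambda>\<epsilon>. sqrt (sqrt (24 / (c + \<bar>\<epsilon>\<bar> * V + K * (\<bar>\<epsilon>\<bar> / \<sigma>)\<^sup>2)) - \<bar>\<epsilon>\<bar> / \<sigma>))"
  define R0 where "R0 = sqrt (sqrt (24 / c))"
  have R0pos: "R0 > 0" using cpos by (simp add: R0_def)
  have R0eq: "(alpha6 / u0 xi0) powr (1/4) = R0"
    using cpos by (simp add: alpha6_def R0_def c_def powr_quarter)
  have limG1: "(G1 \<longlongrightarrow> R0) (at 0)"
  proof -
    have "((\<lambda>\<epsilon>. sqrt (sqrt (24 / (c + \<bar>\<epsilon>\<bar> * V + K * (\<bar>\<epsilon>\<bar> / \<sigma>)\<^sup>2)) - \<bar>\<epsilon>\<bar> / \<sigma>))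
       \<longlongrightarrow> sqrt (sqrt (24 / (c + \<bar>0\<bar> * V + K * (\<bar>0\<bar> / \<sigma>)\<^sup>2)) - \<bar>0\<bar> / \<sigma>)) (at (0::real))"
      using cpos \<sigma> by (intro tendsto_intros) auto
    then show ?thesis by (simp add: G1_def R0_def)
  qed
  have limsq: "((\<lambda>\<epsilon>::real. sqrt (\<bar>\<epsilon>\<bar> / \<sigma>)) \<longlongrightarrow> 0) (at 0)"
  proof -
    have "((\<lambda>\<epsilon>::real. sqrt (\<bar>\<epsilon>\<bar> / \<sigma>)) \<longlongrightarrow> sqrt (\<bar>0\<bar> / \<sigma>)) (at 0)" using \<sigma> by (intro tendsto_intros) auto
    then show ?thesis by simp
  qed
  have limsq2: "((\<lambda>\<epsilon>::real. sqrt (sqrt (\<bar>\<epsilon>\<bar> / \<sigma>))) \<longlongrightarrow> 0) (at 0)"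
  proof -
    have "((\<lambda>\<epsilon>::real. sqrt (sqrt (\<bar>\<epsilon>\<bar> / \<sigma>))) \<longlongrightarrow> sqrt (sqrt (\<bar>0\<bar> / \<sigma>))) (at 0)" using \<sigma> by (intro tendsto_intros) auto
    then show ?thesis by simp
  qed
  have lim\<rho>: "(\<rho> \<longlongrightarrow> 0) (at 0)"
  proof -
    have "(\<rho> \<longlongrightarrow> 0 + 0 / \<sigma>) (at 0)" unfolding \<rho>_def by (intro tendsto_intros limsq limsq2; use \<sigma> in auto)
    then show ?thesis by simp
  qed
  have \<rho>nn: "\<And>\<epsilon>. \<rho> \<epsilon> \<ge> 0" using \<sigma> by (auto simp: \<rho>_def intro!: add_nonneg_nonneg divide_nonneg_pos)
  have limm: "((\<lambda>\<epsilon>. m (\<rho> \<epsilon>)) \<longlongrightarrow> 0) (at 0)"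
  proof (rule tendstoI)
    fix e :: real assume e: "e > 0"
    obtain s0 where s0: "s0 > 0" "\<forall>s. 0 \<le> s \<and> s < s0 \<longrightarrow> m s \<le> e / 2" using mp(3)[of "e/2"] e by auto
    have "eventually (\<lambda>\<epsilon>. \<rho> \<epsilon> < s0) (at 0)" using order_tendstoD(2)[OF lim\<rho> s0(1)] .
    then show "eventually (\<lambda>\<epsilon>. dist (m (\<rho> \<epsilon>)) 0 < e) (at 0)"
    proof (rule eventually_mono)
      fix \<epsilon> assume "\<rho> \<epsilon> < s0"
      then have "m (\<rho> \<epsilon>) \<le> e / 2" "0 \<le> m (\<rho> \<epsilon>)" using s0 \<rho>nn mp(2) by auto
      then show "dist (m (\<rho> \<epsilon>)) 0 < e" using e by (simp add: dist_real_def)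
    qed
  qed
  have limL2: "(L2 \<longlongrightarrow> c) (at 0)"
  proof -
    have "(L2 \<longlongrightarrow> c - \<bar>0\<bar> * V - 0) (at 0)" unfolding L2_def by (intro tendsto_intros limm)
    then show ?thesis by simp
  qed
  have limR2: "((\<lambda>\<epsilon>. sqrt (sqrt (24 / L2 \<epsilon>))) \<longlongrightarrow> R0) (at 0)"
    unfolding R0_def using cpos by (intro tendsto_intros limL2) auto
  define Cond where "Cond \<epsilon> \<longleftrightarrow> sqrt (\<bar>\<epsilon>\<bar> / \<sigma>) / \<sigma> < r0 / 2 \<and> G1 \<epsilon> > 0 \<and>
      R0 * sqrt (sqrt (\<bar>\<epsilon>\<bar> / \<sigma>)) < 1 \<and> (R0 + 1 / \<sigma>) * sqrt (\<bar>\<epsilon>\<bar> / \<sigma>) < r0 \<and> L2 \<epsilon> > 0" for \<epsilon>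
  have ev1: "eventually (\<lambda>\<epsilon>. sqrt (\<bar>\<epsilon>\<bar> / \<sigma>) / \<sigma> < r0 / 2) (at 0)"
  proof -
    have "((\<lambda>\<epsilon>::real. sqrt (\<bar>\<epsilon>\<bar> / \<sigma>) / \<sigma>) \<longlongrightarrow> 0 / \<sigma>) (at 0)" by (intro tendsto_intros limsq; use \<sigma> in auto)
    then show ?thesis using r0 by (intro order_tendstoD(2)) auto
  qed
  have ev3: "eventually (\<lambda>\<epsilon>. R0 * sqrt (sqrt (\<bar>\<epsilon>\<bar> / \<sigma>)) < 1) (at 0)"
  proof -
    have "((\<lambda>\<epsilon>::real. R0 * sqrt (sqrt (\<bar>\<epsilon>\<bar> / \<sigma>))) \<longlongrightarrow> R0 * 0) (at 0)" by (intro tendsto_intros limsq2; use \<sigma> in auto)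
    then show ?thesis by (intro order_tendstoD(2)) auto
  qed
  have ev4: "eventually (\<lambda>\<epsilon>. (R0 + 1 / \<sigma>) * sqrt (\<bar>\<epsilon>\<bar> / \<sigma>) < r0) (at 0)"
  proof -
    have "((\<lambda>\<epsilon>::real. (R0 + 1 / \<sigma>) * sqrt (\<bar>\<epsilon>\<bar> / \<sigma>)) \<longlongrightarrow> (R0 + 1 / \<sigma>) * 0) (at 0)" by (intro tendsto_intros limsq; use \<sigma> in auto)
    then show ?thesis using r0 by (intro order_tendstoD(2)) auto
  qed
  have "eventually Cond (at 0)" unfolding Cond_def
    by (intro eventually_conj ev1 ev3 ev4 order_tendstoD(1)[OF limG1 R0pos] order_tendstoD(1)[OF limL2 cpos])
  then obtain eps0 where eps0: "eps0 > 0" "\<And>\<epsilon>. \<epsilon> \<noteq> 0 \<Longrightarrow> \<bar>\<epsilon>\<bar> < eps0 \<Longrightarrow> Cond \<epsilon>"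
    unfolding eventually_at dist_real_def by auto
  define R1 where "R1 = (\<lambda>(\<epsilon>::real) (d::real) (\<eta>::R6). sqrt (sqrt (24 / (c + \<bar>\<epsilon>\<bar> * V + K * (\<bar>\<epsilon>\<bar> * d)\<^sup>2)) - \<bar>\<epsilon>\<bar> * d))"
  define R2 where "R2 = (\<lambda>(\<epsilon>::real) (d::real) (\<eta>::R6). sqrt (sqrt (24 / L2 \<epsilon>)))"
  have R1bnd: "G1 \<epsilon> \<le> R1 \<epsilon> d \<eta> \<and> R1 \<epsilon> d \<eta> \<le> R0" if "\<epsilon> \<noteq> 0" "\<sigma> < d" "d < 1 / \<sigma>" for \<epsilon> d \<eta>
  proof
    have a: "\<bar>\<epsilon>\<bar> > 0" using that by simp
    have d: "0 < d" using that \<sigma> by simp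
    show "G1 \<epsilon> \<le> R1 \<epsilon> d \<eta>" unfolding G1_def R1_def
      using R1_lower[OF cpos V(1) Kge \<sigma> a d that(3)] by simp
    show "R1 \<epsilon> d \<eta> \<le> R0" unfolding R0_def R1_def
      using R1_upper[OF cpos V(1) Kge a d] by simp
  qed
  show "\<exists>eps0>0. \<exists>R1 R2 :: real \<Rightarrow> real \<Rightarrow> R6 \<Rightarrow> real.
     (\<forall>\<epsilon> d \<eta>. \<epsilon> \<noteq> 0 \<and> \<bar>\<epsilon>\<bar> < eps0 \<and> \<sigma> < d \<and> d < 1 / \<sigma> \<and> norm \<eta> \<le> 1 / \<sigma> \<longrightarrow>
        (let \<delta> = \<bar>\<epsilon>\<bar> * d; \<xi> = xi0 + sqrt \<delta> *\<^sub>R \<eta>;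
             A = {x\<in>\<Omega>. 0 < u0 x + \<epsilon> * v0 x \<and> u0 x + \<epsilon> * v0 x < PU \<delta> \<xi> x}
                 \<inter> ball \<xi> (\<delta> powr (1/4))
         in R1 \<epsilon> d \<eta> > 0 \<and> R2 \<epsilon> d \<eta> > 0 \<and>
            ball \<xi> (R1 \<epsilon> d \<eta> * sqrt \<delta>) \<subseteq> A \<and> A \<subseteq> ball \<xi> (R2 \<epsilon> d \<eta> * sqrt \<delta>))) \<and>
     (\<forall>e>0. \<exists>r>0. \<forall>\<epsilon> d \<eta>. \<epsilon> \<noteq> 0 \<and> \<bar>\<epsilon>\<bar> < min r eps0 \<and> \<sigma> < d \<and> d < 1 / \<sigma> \<and> norm \<eta> \<le> 1 / \<sigma> \<longrightarrow>
        \<bar>R1 \<epsilon> d \<eta> - (alpha6 / u0 xi0) powr (1/4)\<bar> < e \<and>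
        \<bar>R2 \<epsilon> d \<eta> - (alpha6 / u0 xi0) powr (1/4)\<bar> < e)"
  proof (rule exI[of _ eps0], rule conjI[OF eps0(1)], rule exI[of _ R1], rule exI[of _ R2], rule conjI; (intro allI impI)?)
    fix \<epsilon> d :: real and \<eta> :: R6
    assume adm: "\<epsilon> \<noteq> 0 \<and> \<bar>\<epsilon>\<bar> < eps0 \<and> \<sigma> < d \<and> d < 1 / \<sigma> \<and> norm \<eta> \<le> 1 / \<sigma>"
    show "let \<delta> = \<bar>\<epsilon>\<bar> * d; \<xi> = xi0 + sqrt \<delta> *\<^sub>R \<eta>;
             A = {x\<in>\<Omega>. 0 < u0 x + \<epsilon> * v0 x \<and> u0 x + \<epsilon> * v0 x < PU \<delta> \<xi> x}
                 \<inter> ball \<xi> (\<delta> powr (1/4))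
         in R1 \<epsilon> d \<eta> > 0 \<and> R2 \<epsilon> d \<eta> > 0 \<and>
            ball \<xi> (R1 \<epsilon> d \<eta> * sqrt \<delta>) \<subseteq> A \<and> A \<subseteq> ball \<xi> (R2 \<epsilon> d \<eta> * sqrt \<delta>)"
    proof -
      have ne: "\<epsilon> \<noteq> 0" and epsl: "\<bar>\<epsilon>\<bar> < eps0" and d1: "\<sigma> < d" and d2: "d < 1 / \<sigma>" and eta: "norm \<eta> \<le> 1 / \<sigma>"
        using adm by auto
      have C: "Cond \<epsilon>" using eps0(2) ne epsl by blast
      have C1: "sqrt (\<bar>\<epsilon>\<bar> / \<sigma>) / \<sigma> < r0 / 2" and C2: "G1 \<epsilon> > 0"
        and C3: "R0 * sqrt (sqrt (\<bar>\<epsilon>\<bar> / \<sigma>)) < 1" and C4: "(R0 + 1 / \<sigma>) * sqrt (\<bar>\<epsilon>\<bar> / \<sigma>) < r0"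
        and C5: "L2 \<epsilon> > 0" using C unfolding Cond_def by auto
      have apos: "\<bar>\<epsilon>\<bar> > 0" using ne by simp
      have dpos: "d > 0" using d1 \<sigma> by simp
      define t where "t = \<bar>\<epsilon>\<bar> / \<sigma>"
      have C1t: "sqrt t / \<sigma> < r0 / 2" using C1 t_def by simp
      have C3t: "R0 * sqrt (sqrt t) < 1" using C3 t_def by simp
      have C4t: "(R0 + 1 / \<sigma>) * sqrt t < r0" using C4 t_def by simp
      have \<rho>t: "\<rho> \<epsilon> = sqrt (sqrt t) + sqrt t / \<sigma>" by (simp add: \<rho>_def t_def)
      define \<delta> where "\<delta> = \<bar>\<epsilon>\<bar> * d"
      define \<xi> where "\<xi> = xi0 + sqrt \<delta> *\<^sub>R \<eta>"
      define A where "A = {x\<in>\<Omega>. 0 < u0 x + \<epsilon> * v0 x \<and> u0 x + \<epsilon> * v0 x < PU \<delta> \<xi> x} \<inter> ball \<xi> (\<delta> powr (1/4))"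
      have \<delta>pos: "\<delta> > 0" using apos dpos by (simp add: \<delta>_def)
      have "\<bar>\<epsilon>\<bar> * d \<le> \<bar>\<epsilon>\<bar> * (1 / \<sigma>)" using d2 by (intro mult_left_mono) auto
      then have \<delta>t: "\<delta> \<le> t" by (simp add: \<delta>_def t_def)
      have sq1: "sqrt \<delta> \<le> sqrt t" using \<delta>t by simp
      have sq2: "sqrt (sqrt \<delta>) \<le> sqrt (sqrt t)" using \<delta>t by simp
      have sqsq: "sqrt \<delta> = sqrt (sqrt \<delta>) * sqrt (sqrt \<delta>)" using \<delta>pos by simp
      have pq: "\<delta> powr (1/4) = sqrt (sqrt \<delta>)" by (rule powr_quarter[OF \<delta>pos])
      have d\<xi>: "norm (\<xi> - xi0) \<le> sqrt t / \<sigma>"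
      proof -
        have "norm (\<xi> - xi0) = sqrt \<delta> * norm \<eta>" using \<delta>pos by (simp add: \<xi>_def)
        also have "\<dots> \<le> sqrt t * (1 / \<sigma>)" using sq1 eta \<delta>pos by (intro mult_mono) auto
        finally show ?thesis by simp
      qed
      have Pb: "\<forall>x\<in>\<Omega>. PU \<delta> \<xi> x \<le> U_bubble \<delta> \<xi> x \<and> U_bubble \<delta> \<xi> x - K * \<delta>\<^sup>2 \<le> PU \<delta> \<xi> x"
      proof (rule PU_bounds[OF bdd op \<delta>pos])
        show "dirichlet_class \<Omega> (PU \<delta> \<xi>)" using PU_cl \<delta>pos by blast
        show "\<forall>x\<in>\<Omega>. - laplacian (PU \<delta> \<xi>) x = (U_bubble \<delta> \<xi> x)\<^sup>2" using PU_cl \<delta>pos by blast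
        show "\<forall>y\<in>frontier \<Omega>. U_bubble \<delta> \<xi> y \<le> K * \<delta>\<^sup>2"
        proof
          fix y assume y: "y \<in> frontier \<Omega>"
          then have "y \<notin> \<Omega>" using frontier_disjoint_eq op by blast
          then have "y \<notin> ball xi0 r0" using r0 by blast
          then have "r0 \<le> norm (y - xi0)" by (simp add: dist_norm norm_minus_commute)
          moreover have "norm (y - xi0) \<le> norm (y - \<xi>) + norm (\<xi> - xi0)"
            using norm_triangle_ineq[of "y - \<xi>" "\<xi> - xi0"] by simp
          ultimately have ny: "r0 / 2 \<le> norm (y - \<xi>)" using d\<xi> C1t by linarith
          have "U_bubble \<delta> \<xi> y \<le> 24 * \<delta>\<^sup>2 / (r0 / 2) ^ 4"
            by (rule U_le[OF \<delta>pos _ ny]) (use r0 in simp)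
          also have "\<dots> = K * \<delta>\<^sup>2" by (simp add: K_def power_divide)
          finally show "U_bubble \<delta> \<xi> y \<le> K * \<delta>\<^sup>2" .
        qed
      qed
      have fu: "u0 x + \<epsilon> * v0 x \<le> c + \<bar>\<epsilon>\<bar> * V" if "x \<in> \<Omega>" for x
      proof -
        have "u0 x \<le> c" using xi0_max that c_def by simp
        moreover have "\<epsilon> * v0 x \<le> \<bar>\<epsilon>\<bar> * V"
        proof -
          have "\<epsilon> * v0 x \<le> \<bar>\<epsilon>\<bar> * \<bar>v0 x\<bar>" by (metis abs_ge_self abs_mult)
          also have "\<dots> \<le> \<bar>\<epsilon>\<bar> * V" using V(2)[of x] that closure_subset by (intro mult_left_mono) auto
          finally show ?thesis .
        qed
        ultimately show ?thesis by linarith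
      qed
      have fl: "L2 \<epsilon> \<le> u0 x + \<epsilon> * v0 x" if "x \<in> \<Omega>" "norm (x - \<xi>) < sqrt (sqrt \<delta>)" for x
      proof -
        have "norm (x - xi0) \<le> norm (x - \<xi>) + norm (\<xi> - xi0)"
          using norm_triangle_ineq[of "x - \<xi>" "\<xi> - xi0"] by simp
        also have "\<dots> \<le> \<rho> \<epsilon>" using that(2) sq2 d\<xi> \<rho>t by linarith
        finally have "c - u0 x \<le> m (\<rho> \<epsilon>)" using mp(1)[OF that(1)] c_def by simp
        moreover have "- (\<epsilon> * v0 x) \<le> \<bar>\<epsilon>\<bar> * V"
        proof -
          have "- (\<epsilon> * v0 x) \<le> \<bar>\<epsilon>\<bar> * \<bar>v0 x\<bar>" by (metis abs_ge_minus_self abs_mult)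
          also have "\<dots> \<le> \<bar>\<epsilon>\<bar> * V" using V(2)[of x] that closure_subset by (intro mult_left_mono) auto
          finally show ?thesis .
        qed
        ultimately show ?thesis unfolding L2_def by linarith
      qed
      have b: "G1 \<epsilon> \<le> R1 \<epsilon> d \<eta> \<and> R1 \<epsilon> d \<eta> \<le> R0" using R1bnd ne d1 d2 by blast
      have R1pos: "R1 \<epsilon> d \<eta> > 0" using b C2 by linarith
      have R2pos: "R2 \<epsilon> d \<eta> > 0" using C5 by (simp add: R2_def)
      have lower: "ball \<xi> (R1 \<epsilon> d \<eta> * sqrt \<delta>) \<subseteq> A"
      proof
        fix x assume x: "x \<in> ball \<xi> (R1 \<epsilon> d \<eta> * sqrt \<delta>)"
        define n where "n = norm (x - \<xi>)"
        have n: "n < R1 \<epsilon> d \<eta> * sqrt \<delta>" using x by (simp add: n_def dist_norm norm_minus_commute)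
        have "R1 \<epsilon> d \<eta> * sqrt \<delta> \<le> R0 * sqrt \<delta>" using b \<delta>pos by (intro mult_right_mono) auto
        then have nR0: "n < R0 * sqrt \<delta>" using n by linarith
        have "R0 * sqrt \<delta> \<le> sqrt (sqrt \<delta>)"
        proof -
          have "R0 * sqrt (sqrt \<delta>) \<le> R0 * sqrt (sqrt t)" using sq2 R0pos by (intro mult_left_mono) auto
          then have "R0 * sqrt (sqrt \<delta>) \<le> 1" using C3t by simp
          then have "(R0 * sqrt (sqrt \<delta>)) * sqrt (sqrt \<delta>) \<le> 1 * sqrt (sqrt \<delta>)"
            using \<delta>pos by (intro mult_right_mono) auto
          then show ?thesis using sqsq by (simp add: mult.assoc)
        qed
        then have nsm: "n < sqrt (sqrt \<delta>)" using nR0 by linarith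
        have "norm (x - xi0) \<le> n + norm (\<xi> - xi0)"
          using norm_triangle_ineq[of "x - \<xi>" "\<xi> - xi0"] by (simp add: n_def)
        also have "\<dots> < R0 * sqrt t + sqrt t / \<sigma>"
        proof -
          have "R0 * sqrt \<delta> \<le> R0 * sqrt t" using sq1 R0pos by (intro mult_left_mono) auto
          then show ?thesis using nR0 d\<xi> by linarith
        qed
        also have "\<dots> = (R0 + 1 / \<sigma>) * sqrt t" by (simp add: algebra_simps)
        also have "\<dots> < r0" using C4t by simp
        finally have "x \<in> ball xi0 r0" by (simp add: dist_norm norm_minus_commute)
        then have x\<Omega>: "x \<in> \<Omega>" using r0 by blast
        have fpos: "0 < u0 x + \<epsilon> * v0 x" using fl[OF x\<Omega>] nsm C5 n_def by fastforce
        have "c + \<bar>\<epsilon>\<bar> * V + K * \<delta>\<^sup>2 < 24 * \<delta>\<^sup>2 / (\<delta>\<^sup>2 + n\<^sup>2)\<^sup>2"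
        proof (rule lower_key[OF \<delta>pos _ _ R1pos])
          show "0 < c + \<bar>\<epsilon>\<bar> * V + K * \<delta>\<^sup>2" using cpos V(1) Kge by (intro add_pos_nonneg) auto
          show "R1 \<epsilon> d \<eta> = sqrt (sqrt (24 / (c + \<bar>\<epsilon>\<bar> * V + K * \<delta>\<^sup>2)) - \<delta>)"
            by (simp add: R1_def \<delta>_def)
          show "0 \<le> n" by (simp add: n_def)
          show "n < R1 \<epsilon> d \<eta> * sqrt \<delta>" by (rule n)
        qed
        moreover have "U_bubble \<delta> \<xi> x = 24 * \<delta>\<^sup>2 / (\<delta>\<^sup>2 + n\<^sup>2)\<^sup>2" by (simp add: U_bubble_def alpha6_def n_def)
        ultimately have "c + \<bar>\<epsilon>\<bar> * V < PU \<delta> \<xi> x" using Pb x\<Omega> by fastforce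
        then have flt: "u0 x + \<epsilon> * v0 x < PU \<delta> \<xi> x" using fu[OF x\<Omega>] by linarith
        have "x \<in> ball \<xi> (\<delta> powr (1/4))" using nsm pq by (simp add: n_def dist_norm norm_minus_commute)
        then show "x \<in> A" unfolding A_def using x\<Omega> fpos flt by blast
      qed
      have upper: "A \<subseteq> ball \<xi> (R2 \<epsilon> d \<eta> * sqrt \<delta>)"
      proof
        fix x assume x: "x \<in> A"
        have x\<Omega>: "x \<in> \<Omega>" and flt: "u0 x + \<epsilon> * v0 x < PU \<delta> \<xi> x" and xb: "x \<in> ball \<xi> (\<delta> powr (1/4))"
          using x unfolding A_def by auto
        define n where "n = norm (x - \<xi>)"
        have nsm: "n < sqrt (sqrt \<delta>)" using xb pq by (simp add: n_def dist_norm norm_minus_commute)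
        have "n < R2 \<epsilon> d \<eta> * sqrt \<delta>"
        proof (cases "n = 0")
          case True then show ?thesis using R2pos \<delta>pos by simp
        next
          case False
          then have npos: "n > 0" by (simp add: n_def)
          have "L2 \<epsilon> \<le> u0 x + \<epsilon> * v0 x" using fl[OF x\<Omega>] nsm n_def by blast
          also have "\<dots> < PU \<delta> \<xi> x" by (rule flt)
          also have "\<dots> \<le> U_bubble \<delta> \<xi> x" using Pb x\<Omega> by blast
          also have "\<dots> = 24 * \<delta>\<^sup>2 / (\<delta>\<^sup>2 + n\<^sup>2)\<^sup>2" by (simp add: U_bubble_def alpha6_def n_def)
          finally have "L2 \<epsilon> < 24 * \<delta>\<^sup>2 / (\<delta>\<^sup>2 + n\<^sup>2)\<^sup>2" .
          from upper_key[OF \<delta>pos C5 npos this] show ?thesis by (simp add: R2_def)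
        qed
        then show "x \<in> ball \<xi> (R2 \<epsilon> d \<eta> * sqrt \<delta>)" by (simp add: n_def dist_norm norm_minus_commute)
      qed
      have "R1 \<epsilon> d \<eta> > 0 \<and> R2 \<epsilon> d \<eta> > 0 \<and>
            ball \<xi> (R1 \<epsilon> d \<eta> * sqrt \<delta>) \<subseteq> A \<and> A \<subseteq> ball \<xi> (R2 \<epsilon> d \<eta> * sqrt \<delta>)"
        using R1pos R2pos lower upper by blast
      then show ?thesis unfolding Let_def A_def \<xi>_def \<delta>_def .
    qed
  next
    fix e :: real assume e: "e > 0"
    have "eventually (\<lambda>\<epsilon>. R0 - e < G1 \<epsilon> \<and> sqrt (sqrt (24 / L2 \<epsilon>)) < R0 + e \<and> R0 - e < sqrt (sqrt (24 / L2 \<epsilon>))) (at 0)"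
      using e by (intro eventually_conj order_tendstoD[OF limG1] order_tendstoD[OF limR2]) auto
    then obtain r where r: "r > 0" "\<And>\<epsilon>. \<epsilon> \<noteq> 0 \<Longrightarrow> \<bar>\<epsilon>\<bar> < r \<Longrightarrow>
        R0 - e < G1 \<epsilon> \<and> sqrt (sqrt (24 / L2 \<epsilon>)) < R0 + e \<and> R0 - e < sqrt (sqrt (24 / L2 \<epsilon>))"
      unfolding eventually_at dist_real_def by auto
    show "\<exists>r>0. \<forall>\<epsilon> d \<eta>. \<epsilon> \<noteq> 0 \<and> \<bar>\<epsilon>\<bar> < min r eps0 \<and> \<sigma> < d \<and> d < 1 / \<sigma> \<and> norm \<eta> \<le> 1 / \<sigma> \<longrightarrow>
        \<bar>R1 \<epsilon> d \<eta> - (alpha6 / u0 xi0) powr (1/4)\<bar> < e \<and>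
        \<bar>R2 \<epsilon> d \<eta> - (alpha6 / u0 xi0) powr (1/4)\<bar> < e"
    proof (rule exI[of _ r], rule conjI[OF r(1)], intro allI impI)
      fix \<epsilon> d :: real and \<eta> :: R6
      assume adm: "\<epsilon> \<noteq> 0 \<and> \<bar>\<epsilon>\<bar> < min r eps0 \<and> \<sigma> < d \<and> d < 1 / \<sigma> \<and> norm \<eta> \<le> 1 / \<sigma>"
      have b: "G1 \<epsilon> \<le> R1 \<epsilon> d \<eta> \<and> R1 \<epsilon> d \<eta> \<le> R0" using R1bnd adm by blast
      have rr: "R0 - e < G1 \<epsilon> \<and> sqrt (sqrt (24 / L2 \<epsilon>)) < R0 + e \<and> R0 - e < sqrt (sqrt (24 / L2 \<epsilon>))"
        using r(2) adm by simp
      show "\<bar>R1 \<epsilon> d \<eta> - (alpha6 / u0 xi0) powr (1/4)\<bar> < e \<and>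
        \<bar>R2 \<epsilon> d \<eta> - (alpha6 / u0 xi0) powr (1/4)\<bar> < e"
        unfolding R0eq using b rr unfolding R2_def by auto
    qed
  qed
qed

end
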